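(* If $xy\in E(C)$ and $P$ is an external $x,y$-path, then $P$ has an even number of edges.
   Context: All graphs are simple. $\mathcal{G}^*$ denotes the class of graphs in which any two distinct odd cycles share at most one edge. Standing setting: $G\in\mathcal{G}^*$ is $2$-connected, and $C$ is a longest odd cycle of $G$ with $|C|\ge 5$. We also write $C$ for its vertex set. For $x,y\in C$, an external $x,y$-path is an $x,y$-path meeting $C$ only at its endpoints. *)

theory Defs
  imports Main
begin

definition graph :: "'a set \<Rightarrow> 'a set set \<Rightarrow> bool" where
  "graph V E \<longleftrightarrow> finite V \<and> (\<forall>e\<in>E. \<exists>u v. e = {u, v} \<and> u \<noteq> v \<and> u \<in> V \<and> v \<in> V)"

definition path_in :: "'a set \<Rightarrow> 'a set set \<Rightarrow> 'a list \<Rightarrow> bool" where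
  "path_in V E p \<longleftrightarrow> p \<noteq> [] \<and> distinct p \<and> set p \<subseteq> V \<and>
     (\<forall>i. Suc i < length p \<longrightarrow> {p ! i, p ! Suc i} \<in> E)"

definition path_edges :: "'a list \<Rightarrow> 'a set set" where
  "path_edges p = {{p ! i, p ! Suc i} | i. Suc i < length p}"

text \<open>A cycle is a list of at least 3 distinct vertices, cyclically consecutive ones adjacent;
  its length (number of vertices = number of edges) is the length of the list.\<close>
definition cycle_in :: "'a set \<Rightarrow> 'a set set \<Rightarrow> 'a list \<Rightarrow> bool" where
  "cycle_in V E c \<longleftrightarrow> 3 \<le> length c \<and> distinct c \<and> set c \<subseteq> V \<and>
     (\<forall>i < length c. {c ! i, c ! (Suc i mod length c)} \<in> E)"

definition cycle_edges :: "'a list \<Rightarrow> 'a set set" where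
  "cycle_edges c = {{c ! i, c ! (Suc i mod length c)} | i. i < length c}"

definition odd_cycle :: "'a set \<Rightarrow> 'a set set \<Rightarrow> 'a list \<Rightarrow> bool" where
  "odd_cycle V E c \<longleftrightarrow> cycle_in V E c \<and> odd (length c)"

text \<open>The class G*: any two distinct odd cycles (as subgraphs, i.e. distinct edge sets)
  share at most one edge.\<close>
definition G_star :: "'a set \<Rightarrow> 'a set set \<Rightarrow> bool" where
  "G_star V E \<longleftrightarrow> (\<forall>c d. odd_cycle V E c \<and> odd_cycle V E d \<and> cycle_edges c \<noteq> cycle_edges d
      \<longrightarrow> card (cycle_edges c \<inter> cycle_edges d) \<le> 1)"

definition connected_graph :: "'a set \<Rightarrow> 'a set set \<Rightarrow> bool" where
  "connected_graph V E \<longleftrightarrow> (\<forall>u\<in>V. \<forall>v\<in>V. \<exists>p. path_in V E p \<and> hd p = u \<and> last p = v)"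

definition two_connected :: "'a set \<Rightarrow> 'a set set \<Rightarrow> bool" where
  "two_connected V E \<longleftrightarrow> 3 \<le> card V \<and> connected_graph V E \<and>
     (\<forall>x\<in>V. connected_graph (V - {x}) {e \<in> E. x \<notin> e})"

end

theory Submission
  imports Defs
begin

definition edgeset :: "'a list \<Rightarrow> 'a set set" where
  "edgeset p = (\<lambda>(a,b). {a,b}) ` set (zip p (tl p))"

lemma edgeset_simps[simp]: "edgeset [] = {}" "edgeset [a] = {}"
  "edgeset (a#b#xs) = insert {a,b} (edgeset (b#xs))"
  by (auto simp: edgeset_def)

lemma edgeset_finite[simp]: "finite (edgeset p)"
  by (simp add: edgeset_def)

lemma edgeset_Cons: "p \<noteq> [] \<Longrightarrow> edgeset (a#p) = insert {a, hd p} (edgeset p)"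
  by (cases p) auto

lemma edgeset_append: "xs \<noteq> [] \<Longrightarrow> edgeset (xs @ ys) = edgeset xs \<union> edgeset (last xs # ys)"
proof (induction xs)
  case Nil then show ?case by simp
next
  case (Cons a xs)
  show ?case
  proof (cases xs)
    case Nil then show ?thesis by simp
  next
    case (Cons b xs')
    then show ?thesis using Cons.IH by (simp add: Cons)
  qed
qed

lemma edgeset_rev: "edgeset (rev p) = edgeset p"
proof (induction p)
  case Nil then show ?case by simp
next
  case (Cons a p)
  show ?case
  proof (cases "p = []")
    case True then show ?thesis by simp
  next
    case False
    have "edgeset (rev (a#p)) = edgeset (rev p @ [a])" by simp
    also have "\<dots> = edgeset p \<union> {{hd p, a}}"
      using False Cons.IH by (simp add: edgeset_append last_rev)
    also have "\<dots> = edgeset (a#p)" using False by (auto simp: edgeset_Cons insert_commute)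
    finally show ?thesis .
  qed
qed

lemma path_edges_eq: "path_edges p = edgeset p"
  unfolding path_edges_def edgeset_def
proof (intro equalityI subsetI)
  fix e assume "e \<in> {{p ! i, p ! Suc i} |i. Suc i < length p}"
  then obtain i where "Suc i < length p" "e = {p ! i, p ! Suc i}" by blast
  then show "e \<in> (\<lambda>(a,b). {a,b}) ` set (zip p (tl p))"
    by (auto simp: set_zip nth_tl intro!: image_eqI[where x="(p!i, tl p ! i)"])
next
  fix e assume "e \<in> (\<lambda>(a,b). {a,b}) ` set (zip p (tl p))"
  then show "e \<in> {{p ! i, p ! Suc i} |i. Suc i < length p}"
    by (auto simp: set_zip nth_tl)
qed

lemma cycle_edges_eq:
  assumes "c \<noteq> []" shows "cycle_edges c = edgeset (c @ [hd c])"
proof -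
  have h: "\<And>i. i < length c \<Longrightarrow> (c@[hd c]) ! Suc i = c ! (Suc i mod length c)"
  proof -
    fix i assume "i < length c"
    then show "(c@[hd c]) ! Suc i = c ! (Suc i mod length c)"
    proof (cases "Suc i < length c")
      case True then show ?thesis by (simp add: nth_append)
    next
      case False then have "Suc i = length c" using \<open>i < length c\<close> by simp
      then show ?thesis using assms by (simp add: nth_append hd_conv_nth)
    qed
  qed
  have h2: "\<And>i. i < length c \<Longrightarrow> (c@[hd c]) ! i = c ! i" by (simp add: nth_append)
  have "edgeset (c @ [hd c]) = {{(c@[hd c]) ! i, (c@[hd c]) ! Suc i} |i. Suc i < length (c @ [hd c])}"
    by (simp add: path_edges_eq[symmetric] path_edges_def)
  also have "\<dots> = {{c ! i, c ! (Suc i mod length c)} |i. i < length c}"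
    using h h2 by (auto) (metis h h2)+
  finally show ?thesis by (simp add: cycle_edges_def)
qed

lemma core:
  assumes gs: "G_star V E" and oc: "odd_cycle V E C" and CAB: "C = A @ B" and An: "A \<noteq> []"
    and n5: "5 \<le> length C"
    and Md: "distinct M" and MC: "set M \<inter> set C = {}" and MV: "set M \<subseteq> V"
    and PE: "edgeset (last A # M @ [hd (B@A)]) \<subseteq> E"
    and Pdisj: "edgeset (last A # M @ [hd (B@A)]) \<inter> cycle_edges C = {}"
    and ev: "even (length M)"
  shows False
proof -
  define Q where "Q = B @ A"
  define D where "D = Q @ M"
  have ci: "cycle_in V E C" and oddC: "odd (length C)" using oc by (auto simp: odd_cycle_def)
  have Qne: "Q \<noteq> []" using An by (simp add: Q_def)
  have lastQ: "last Q = last A" using An by (simp add: Q_def)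
  have setQ: "set Q = set C" using CAB by (auto simp: Q_def)
  have distC: "distinct C" using ci by (simp add: cycle_in_def)
  have distQ: "distinct Q" using distC CAB by (auto simp: Q_def)
  have lenQ: "length Q = length C" using CAB by (simp add: Q_def)
  have Cne: "C \<noteq> []" using CAB An by simp
  have CV: "set C \<subseteq> V" using ci by (simp add: cycle_in_def)
  have cE: "cycle_edges C \<subseteq> E" using ci by (auto simp: cycle_in_def cycle_edges_def)
  have QC: "edgeset Q \<subseteq> cycle_edges C"
  proof (cases "B = []")
    case True
    then show ?thesis using CAB An
      by (auto simp: Q_def cycle_edges_eq edgeset_append)
  next
    case False
    have hdC: "hd C = hd A" using CAB An by simp
    have e1: "edgeset Q = edgeset B \<union> edgeset (last B # A)" using False by (simp add: Q_def edgeset_append)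
    have "cycle_edges C = edgeset A \<union> edgeset ((last A # B) @ [hd A])"
      using Cne hdC CAB An by (simp add: cycle_edges_eq edgeset_append)
    also have "\<dots> = edgeset A \<union> (edgeset (last A # B) \<union> {{last B, hd A}})"
      using False edgeset_append[of "last A # B" "[hd A]"] by simp
    finally have "cycle_edges C = edgeset A \<union> (insert {last A, hd B} (edgeset B) \<union> {{last B, hd A}})"
      using False by (simp add: edgeset_Cons)
    moreover have "edgeset (last B # A) = insert {last B, hd A} (edgeset A)" using An by (simp add: edgeset_Cons)
    ultimately show ?thesis using e1 by auto
  qed
  have Dne: "D \<noteq> []" using Qne by (simp add: D_def)
  have hdD: "hd D = hd Q" using Qne by (simp add: D_def)
  have cD: "cycle_edges D = edgeset Q \<union> edgeset (last A # M @ [hd (B@A)])"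
  proof -
    have "D @ [hd D] = Q @ (M @ [hd Q])" using hdD by (simp add: D_def)
    then have "cycle_edges D = edgeset (Q @ (M @ [hd Q]))" using cycle_edges_eq[OF Dne] by (simp only:)
    also have "\<dots> = edgeset Q \<union> edgeset (last Q # M @ [hd Q])" using Qne by (rule edgeset_append)
    finally show ?thesis using lastQ by (simp add: Q_def)
  qed
  have oD: "odd_cycle V E D"
    unfolding odd_cycle_def cycle_in_def
  proof (intro conjI)
    show "3 \<le> length D" using n5 lenQ by (simp add: D_def)
    show "distinct D" using distQ Md MC setQ by (auto simp: D_def)
    show "set D \<subseteq> V" using CV MV setQ by (auto simp: D_def)
    have "cycle_edges D \<subseteq> E" using cD QC cE PE by auto
    then show "\<forall>i<length D. {D ! i, D ! (Suc i mod length D)} \<in> E"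
      by (auto simp: cycle_edges_def)
    show "odd (length D)" using oddC ev lenQ by (simp add: D_def)
  qed
  obtain a b c r where Qabc: "Q = a#b#c#r"
  proof -
    have "length Q \<ge> 3" using lenQ n5 by simp
    then show ?thesis using that
      by (cases Q; cases "tl Q"; cases "tl (tl Q)") auto
  qed
  have ac: "a \<noteq> c" using distQ Qabc by auto
  have two: "{{a,b},{b,c}} \<subseteq> cycle_edges C \<inter> cycle_edges D"
    using QC cD Qabc by auto
  have "{a,b} \<noteq> {b,c}" using ac by (auto simp: doubleton_eq_iff)
  then have "card {{a,b},{b,c}} = 2" by simp
  moreover have "finite (cycle_edges C \<inter> cycle_edges D)" using Cne by (simp add: cycle_edges_eq)
  ultimately have c2: "2 \<le> card (cycle_edges C \<inter> cycle_edges D)"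
    using two by (metis card_mono)
  have "{last A, hd (M @ [hd (B@A)])} \<in> edgeset (last A # M @ [hd (B@A)])"
    by (simp add: edgeset_Cons)
  then have neq: "cycle_edges C \<noteq> cycle_edges D" using Pdisj cD by auto
  show False using gs oc oD neq c2 unfolding G_star_def by fastforce
qed

theorem mainTheorem6:
  fixes V :: "'a set" and E :: "'a set set" and C P :: "'a list" and x y :: 'a
  assumes "graph V E"
    and "G_star V E"
    and "two_connected V E"
    and "odd_cycle V E C"
    and "\<forall>D. odd_cycle V E D \<longrightarrow> length D \<le> length C"
    and "5 \<le> length C"
    and "{x, y} \<in> cycle_edges C"
    and "path_in V E P" and "hd P = x" and "last P = y"
    and "set P \<inter> set C = {x, y}"
    and "path_edges P \<inter> cycle_edges C = {}"
  shows "even (length P - 1)"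
proof (rule ccontr)
  assume od: "\<not> even (length P - 1)"
  note gs = assms(2) and oc = assms(4) and n5 = assms(6) and xy = assms(7) and pin = assms(8)
  have ci: "cycle_in V E C" using oc by (simp add: odd_cycle_def)
  have xyE: "{x,y} \<in> E" using xy ci by (auto simp: cycle_in_def cycle_edges_def)
  have xny: "x \<noteq> y" using xyE assms(1) unfolding graph_def by (metis doubleton_eq_iff insert_absorb2)
  have Pne: "P \<noteq> []" using pin by (simp add: path_in_def)
  have "length P \<ge> 2"
  proof (rule ccontr)
    assume "\<not> 2 \<le> length P"
    then obtain z where "P = [z]" using Pne by (cases P) (auto simp: Suc_le_eq)
    then show False using xny assms(9,10) by simp
  qed
  define M where "M = butlast (tl P)"
  have PM: "P = x # M @ [y]"
  proof -
    obtain z t where Pzt: "P = z # t" "t \<noteq> []" using \<open>length P \<ge> 2\<close>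
      by (cases P) (auto simp: Suc_le_eq)
    then show ?thesis using assms(9,10) append_butlast_last_id[of t] by (simp add: M_def)
  qed
  have distP: "distinct P" using pin by (simp add: path_in_def)
  have Md: "distinct M" using distP PM by simp
  have MV: "set M \<subseteq> V" using pin PM by (auto simp: path_in_def)
  have MC: "set M \<inter> set C = {}" using assms(11) distP PM by auto
  have PE: "edgeset P \<subseteq> E" using pin by (auto simp: path_in_def path_edges_eq[symmetric] path_edges_def)
  have Pdisj: "edgeset P \<inter> cycle_edges C = {}" using assms(12) by (simp add: path_edges_eq)
  have ev: "even (length M)" using od PM by simp
  obtain i where i: "i < length C" "{x,y} = {C ! i, C ! (Suc i mod length C)}"
    using xy by (auto simp: cycle_edges_def)
  define A where "A = take (Suc i) C"
  define B where "B = drop (Suc i) C"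
  have CAB: "C = A @ B" by (simp add: A_def B_def)
  have An: "A \<noteq> []" using i by (auto simp: A_def)
  have lA: "last A = C ! i" proof -
    have l: "length (take (Suc i) C) = Suc i" using i by simp
    have "last (take (Suc i) C) = take (Suc i) C ! i" using l
      by (metis diff_Suc_1 last_conv_nth list.size(3) nat.distinct(1))
    then show ?thesis by (simp add: A_def)
  qed
  have hBA: "hd (B @ A) = C ! (Suc i mod length C)"
  proof (cases "Suc i < length C")
    case True then show ?thesis by (simp add: B_def hd_drop_conv_nth)
  next
    case False
    then have "Suc i = length C" using i by simp
    moreover have "C \<noteq> []" using i by auto
    ultimately show ?thesis using i by (simp add: B_def A_def hd_conv_nth)
  qed
  have xy2: "{x,y} = {last A, hd (B@A)}" using i lA hBA by simp
  show False
  proof (cases "x = last A")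
    case True
    then have "y = hd (B@A)" using xy2 xny by (auto simp: doubleton_eq_iff)
    then have "last A # M @ [hd (B@A)] = P" using True PM by simp
    then show False using core[OF gs oc CAB An n5 Md MC MV _ _ ev] PE Pdisj by simp
  next
    case False
    then have "x = hd (B@A)" "y = last A" using xy2 xny by (auto simp: doubleton_eq_iff)
    then have "last A # rev M @ [hd (B@A)] = rev P" using PM by simp
    moreover have "even (length (rev M))" using ev by simp
    ultimately show False using core[OF gs oc CAB An n5, of "rev M"] Md MC MV PE Pdisj
      edgeset_rev[of P] by simp
  qed
qed

end
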